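(* Let $I\subset\mathbb{Z}$ be an interval and let $\vec r,\vec{\bar r}:I\to\mathbb{R}^3$ be two discrete centroaffine space curves. Then there exists $A\in GL(3,\mathbb{R})$ with $\vec r(k)=A\,\vec{\bar r}(k)$ for all $k\in I$ if and only if the two curves have the same first and second centroaffine curvatures and the same centroaffine torsions at all corresponding points where these are defined.
   Context: A discrete centroaffine space curve is a map $\vec r:I\to\mathbb{R}^3$ ($I\subset\mathbb{Z}$ an interval containing at least three consecutive integers) with $[\vec r_{k-1},\vec r_k,\vec r_{k+1}]\ne0$ whenever $k-1,k,k+1\in I$, where $\vec r_k=\vec r(k)$, $[\cdot,\cdot,\cdot]$ is the $3\times3$ determinant and $\vec t_k=\vec r_{k+1}-\vec r_k$. With $D_k=[\vec r_{k-1},\vec r_k,\vec r_{k+1}]$ $(=[\vec r_k,\vec t_{k-1},\vec t_k])$, the first and second centroaffine curvatures and the centroaffine torsion at $k$ (for $k-1,\dots,k+2\in I$) are $\kappa_k=\frac{[\vec r_k,\vec r_{k+1},\vec r_{k+2}]}{D_k}$, $\bar\kappa_k=\frac{[\vec r_{k+1},\vec t_{k-1},\vec t_{k+1}]}{D_k}$, $\tau_k=\frac{[\vec t_{k-1},\vec t_k,\vec t_{k+1}]}{D_k}$. *)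

theory Defs
  imports "HOL-Analysis.Analysis"
begin

definition det3 :: "real^3 \<Rightarrow> real^3 \<Rightarrow> real^3 \<Rightarrow> real" where
  "det3 a b c = det (vector [a, b, c] :: real^3^3)"

definition int_interval :: "int set \<Rightarrow> bool" where
  "int_interval I \<longleftrightarrow> (\<forall>a b c. a \<in> I \<longrightarrow> c \<in> I \<longrightarrow> a \<le> b \<longrightarrow> b \<le> c \<longrightarrow> b \<in> I)"

definition tvec :: "(int \<Rightarrow> real^3) \<Rightarrow> int \<Rightarrow> real^3" where
  "tvec r k = r (k + 1) - r k"

definition Dval :: "(int \<Rightarrow> real^3) \<Rightarrow> int \<Rightarrow> real" where
  "Dval r k = det3 (r (k - 1)) (r k) (r (k + 1))"

definition discrete_centroaffine_curve :: "int set \<Rightarrow> (int \<Rightarrow> real^3) \<Rightarrow> bool" where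
  "discrete_centroaffine_curve I r \<longleftrightarrow>
     int_interval I \<and> (\<exists>k. k - 1 \<in> I \<and> k \<in> I \<and> k + 1 \<in> I) \<and>
     (\<forall>k. k - 1 \<in> I \<and> k \<in> I \<and> k + 1 \<in> I \<longrightarrow> Dval r k \<noteq> 0)"

definition ca_kappa :: "(int \<Rightarrow> real^3) \<Rightarrow> int \<Rightarrow> real" where
  "ca_kappa r k = det3 (r k) (r (k + 1)) (r (k + 2)) / Dval r k"

definition ca_kappa_bar :: "(int \<Rightarrow> real^3) \<Rightarrow> int \<Rightarrow> real" where
  "ca_kappa_bar r k = det3 (r (k + 1)) (tvec r (k - 1)) (tvec r (k + 1)) / Dval r k"

definition ca_torsion :: "(int \<Rightarrow> real^3) \<Rightarrow> int \<Rightarrow> real" where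
  "ca_torsion r k = det3 (tvec r (k - 1)) (tvec r k) (tvec r (k + 1)) / Dval r k"

end

theory Submission imports Defs begin


lemma det3_exp: "det3 a b c =
    a$1 * b$2 * c$3 + a$2 * b$3 * c$1 + a$3 * b$1 * c$2
  - a$1 * b$3 * c$2 - a$2 * b$1 * c$3 - a$3 * b$2 * c$1"
  unfolding det3_def det_3 by simp

lemma det3_mult: "det3 (A *v a) (A *v b) (A *v c) = det A * det3 a b c"
  unfolding det3_exp det_3 by (simp add: matrix_vector_mult_def sum_3 algebra_simps)

lemma cramer:
  fixes u v w z :: "real^3"
  assumes D: "det3 u v w \<noteq> 0"
  shows "z = (det3 v w z / det3 u v w) *\<^sub>R u
     - ((det3 w (v-u) (z-w) + det3 v w z) / det3 u v w) *\<^sub>R v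
     + (1 + det3 w (v-u) (z-w) / det3 u v w + det3 (v-u) (w-v) (z-w) / det3 u v w) *\<^sub>R w"
proof -
  have "det3 u v w *\<^sub>R z = det3 v w z *\<^sub>R u
     - (det3 w (v-u) (z-w) + det3 v w z) *\<^sub>R v
     + (det3 u v w + det3 w (v-u) (z-w) + det3 (v-u) (w-v) (z-w)) *\<^sub>R w"
    unfolding vec_eq_iff forall_3 det3_exp by (simp add: algebra_simps)
  then have "inverse (det3 u v w) *\<^sub>R (det3 u v w *\<^sub>R z) = inverse (det3 u v w) *\<^sub>R (det3 v w z *\<^sub>R u
     - (det3 w (v-u) (z-w) + det3 v w z) *\<^sub>R v
     + (det3 u v w + det3 w (v-u) (z-w) + det3 (v-u) (w-v) (z-w)) *\<^sub>R w)" by simp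
  then show ?thesis using D
    by (simp add: scaleR_add_right scaleR_diff_right divide_inverse_commute add_divide_distrib diff_divide_distrib distrib_left)
qed

lemma rec:
  assumes D: "Dval r k \<noteq> 0"
  shows "r (k+2) = ca_kappa r k *\<^sub>R r (k-1) - (ca_kappa_bar r k + ca_kappa r k) *\<^sub>R r k
     + (1 + ca_kappa_bar r k + ca_torsion r k) *\<^sub>R r (k+1)"
proof -
  have e1: "k - 1 + 1 = k" "k + 1 + 1 = k + 2" by simp_all
  have "det3 (r (k-1)) (r k) (r (k+1)) \<noteq> 0" using D by (simp add: Dval_def)
  from cramer[OF this, of "r (k+2)"] show ?thesis
    unfolding ca_kappa_def ca_kappa_bar_def ca_torsion_def tvec_def Dval_def e1
    by (simp add: add_divide_distrib add.commute)
qed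

lemma step_up:
  fixes A :: "real^3^3"
  assumes Dr: "Dval r k \<noteq> 0" and Drb: "Dval rb k \<noteq> 0"
    and inv: "ca_kappa r k = ca_kappa rb k" "ca_kappa_bar r k = ca_kappa_bar rb k"
      "ca_torsion r k = ca_torsion rb k"
    and h: "r (k-1) = A *v rb (k-1)" "r k = A *v rb k" "r (k+1) = A *v rb (k+1)"
  shows "r (k+2) = A *v rb (k+2)"
  apply (subst rec[OF Dr], subst rec[OF Drb])
  apply (simp only: inv h)
  by (simp add: algebra_simps)

lemma step_down:
  fixes A :: "real^3^3"
  assumes Dr: "Dval r k \<noteq> 0" and Drb: "Dval rb k \<noteq> 0" and Dr1: "Dval r (k+1) \<noteq> 0"
    and inv: "ca_kappa r k = ca_kappa rb k" "ca_kappa_bar r k = ca_kappa_bar rb k"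
      "ca_torsion r k = ca_torsion rb k"
    and h: "r (k+2) = A *v rb (k+2)" "r k = A *v rb k" "r (k+1) = A *v rb (k+1)"
  shows "r (k-1) = A *v rb (k-1)"
proof -
  have "ca_kappa r k \<noteq> 0" proof -
    have "k + 1 - 1 = k" "k + 1 + 1 = k + 2" by simp_all
    then show ?thesis using Dr Dr1 unfolding ca_kappa_def Dval_def by (simp add: add.commute)
  qed
  have e1: "ca_kappa r k *\<^sub>R r (k-1) = r (k+2) + (ca_kappa_bar r k + ca_kappa r k) *\<^sub>R r k
     - (1 + ca_kappa_bar r k + ca_torsion r k) *\<^sub>R r (k+1)"
    using rec[OF Dr] by (simp add: algebra_simps)
  have e2: "ca_kappa rb k *\<^sub>R rb (k-1) = rb (k+2) + (ca_kappa_bar rb k + ca_kappa rb k) *\<^sub>R rb k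
     - (1 + ca_kappa_bar rb k + ca_torsion rb k) *\<^sub>R rb (k+1)"
    using rec[OF Drb] by (simp add: algebra_simps)
  have e3: "r (k+2) + (ca_kappa_bar r k + ca_kappa r k) *\<^sub>R r k
     - (1 + ca_kappa_bar r k + ca_torsion r k) *\<^sub>R r (k+1) = A *v (rb (k+2) + (ca_kappa_bar rb k + ca_kappa rb k) *\<^sub>R rb k
     - (1 + ca_kappa_bar rb k + ca_torsion rb k) *\<^sub>R rb (k+1))"
    apply (simp only: h inv) by (simp add: algebra_simps)
  have "ca_kappa r k *\<^sub>R r (k-1) = ca_kappa r k *\<^sub>R (A *v rb (k-1))"
  proof -
    have "ca_kappa r k *\<^sub>R r (k-1) = A *v (ca_kappa rb k *\<^sub>R rb (k-1))"
      using e1 e3 e2 by simp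
    also have "\<dots> = ca_kappa r k *\<^sub>R (A *v rb (k-1))"
      by (simp add: matrix_vector_mult_scaleR inv(1))
    finally show ?thesis .
  qed
  then show ?thesis using \<open>ca_kappa r k \<noteq> 0\<close> by simp
qed


lemma iv_mem: "int_interval I \<Longrightarrow> a \<in> I \<Longrightarrow> c \<in> I \<Longrightarrow> a \<le> b \<Longrightarrow> b \<le> c \<Longrightarrow> b \<in> I"
  unfolding int_interval_def by blast

lemma invariants_eq:
  fixes A :: "real^3^3"
  assumes dA: "det A \<noteq> 0"
    and h: "r (k-1) = A *v rb (k-1)" "r k = A *v rb k" "r (k+1) = A *v rb (k+1)" "r (k+2) = A *v rb (k+2)"
  shows "ca_kappa r k = ca_kappa rb k \<and> ca_kappa_bar r k = ca_kappa_bar rb k \<and>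
              ca_torsion r k = ca_torsion rb k"
proof -
  have e: "k - 1 + 1 = k" "k + 1 + 1 = k + 2" by simp_all
  show ?thesis
    unfolding ca_kappa_def ca_kappa_bar_def ca_torsion_def Dval_def tvec_def e
    unfolding h matrix_vector_mult_diff_distrib[symmetric] det3_mult
    using dA by simp
qed

lemma row_vector3: "row i (vector [a, b, c] :: real^3^3) = (vector [a, b, c] :: real^3^3) $ i"
  by (simp add: row_def vec_eq_iff)

theorem proposition4p3:
  fixes I :: "int set" and r rb :: "int \<Rightarrow> real^3"
  assumes "discrete_centroaffine_curve I r" and "discrete_centroaffine_curve I rb"
  shows "(\<exists>A :: real^3^3. invertible A \<and> (\<forall>k\<in>I. r k = A *v rb k)) \<longleftrightarrow>
         (\<forall>k. k - 1 \<in> I \<and> k \<in> I \<and> k + 1 \<in> I \<and> k + 2 \<in> I \<longrightarrow>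
              ca_kappa r k = ca_kappa rb k \<and> ca_kappa_bar r k = ca_kappa_bar rb k \<and>
              ca_torsion r k = ca_torsion rb k)"
proof
  assume "\<exists>A :: real^3^3. invertible A \<and> (\<forall>k\<in>I. r k = A *v rb k)"
  then obtain A :: "real^3^3" where iA: "invertible A" and hA: "\<forall>k\<in>I. r k = A *v rb k" by blast
  have dA: "det A \<noteq> 0" using iA invertible_det_nz by blast
  show "\<forall>k. k - 1 \<in> I \<and> k \<in> I \<and> k + 1 \<in> I \<and> k + 2 \<in> I \<longrightarrow>
              ca_kappa r k = ca_kappa rb k \<and> ca_kappa_bar r k = ca_kappa_bar rb k \<and>
              ca_torsion r k = ca_torsion rb k"
    using invariants_eq[OF dA] hA by blast
next
  assume inv: "\<forall>k. k - 1 \<in> I \<and> k \<in> I \<and> k + 1 \<in> I \<and> k + 2 \<in> I \<longrightarrow>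
              ca_kappa r k = ca_kappa rb k \<and> ca_kappa_bar r k = ca_kappa_bar rb k \<and>
              ca_torsion r k = ca_torsion rb k"
  have iv: "int_interval I" and Dr: "\<And>k. k - 1 \<in> I \<Longrightarrow> k \<in> I \<Longrightarrow> k + 1 \<in> I \<Longrightarrow> Dval r k \<noteq> 0"
    using assms(1) unfolding discrete_centroaffine_curve_def by blast+
  have Drb: "\<And>k. k - 1 \<in> I \<Longrightarrow> k \<in> I \<Longrightarrow> k + 1 \<in> I \<Longrightarrow> Dval rb k \<noteq> 0"
    using assms(2) unfolding discrete_centroaffine_curve_def by blast
  obtain k0 where k0: "k0 - 1 \<in> I" "k0 \<in> I" "k0 + 1 \<in> I"
    using assms(1) unfolding discrete_centroaffine_curve_def by blast
  define Rm :: "real^3^3" where "Rm = transpose (vector [r (k0-1), r k0, r (k0+1)])"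
  define Bm :: "real^3^3" where "Bm = transpose (vector [rb (k0-1), rb k0, rb (k0+1)])"
  have dB: "det Bm \<noteq> 0" using Drb[OF k0] unfolding Bm_def det_transpose Dval_def det3_def .
  have dR: "det Rm \<noteq> 0" using Dr[OF k0] unfolding Rm_def det_transpose Dval_def det3_def .
  have "invertible Bm" using dB invertible_det_nz by blast
  then obtain B' :: "real^3^3" where B': "B' ** Bm = mat 1" using invertible_left_inverse by blast
  define A where "A = Rm ** B'"
  have AB: "A ** Bm = Rm" unfolding A_def using B' by (simp add: matrix_mul_assoc[symmetric])
  have dA: "det A \<noteq> 0" using dR unfolding AB[symmetric] det_mul by simp
  have iA: "invertible A" using dA invertible_det_nz by blast
  have col: "A *v (Bm *v axis i 1) = Rm *v axis i 1" for i
    by (simp add: matrix_vector_mul_assoc AB)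
  have b1: "r (k0-1) = A *v rb (k0-1)" using col[of 1]
    by (simp add: matrix_vector_mult_basis Rm_def Bm_def row_vector3)
  have b2: "r k0 = A *v rb k0" using col[of 2]
    by (simp add: matrix_vector_mult_basis Rm_def Bm_def row_vector3)
  have b3: "r (k0+1) = A *v rb (k0+1)" using col[of 3]
    by (simp add: matrix_vector_mult_basis Rm_def Bm_def row_vector3)
  define P where "P k \<longleftrightarrow> r k = A *v rb k" for k
  have up: "k0 + int n + 1 \<in> I \<longrightarrow> P (k0 + int n - 1) \<and> P (k0 + int n) \<and> P (k0 + int n + 1)" for n
  proof (induction n)
    case 0
    then show ?case using b1 b2 b3 by (simp add: P_def)
  next
    case (Suc n)
    define m where "m = k0 + int n"
    have em: "k0 + int (Suc n) = m + 1" unfolding m_def by simp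
    show ?case unfolding em
    proof
      assume h: "m + 1 + 1 \<in> I"
      have m1: "m + 1 \<in> I" by (rule iv_mem[OF iv k0(1) h]) (simp_all add: m_def)
      have m0: "m \<in> I" by (rule iv_mem[OF iv k0(1) h]) (simp_all add: m_def)
      have mm: "m - 1 \<in> I" by (rule iv_mem[OF iv k0(1) h]) (simp_all add: m_def)
      have m2: "m + 2 \<in> I" using h by (simp add: add.assoc)
      from Suc m1 have IH: "P (m - 1)" "P m" "P (m+1)" unfolding m_def by auto
      have "P (m+2)" unfolding P_def
        apply (rule step_up[OF Dr[OF mm m0 m1] Drb[OF mm m0 m1]])
        using inv mm m0 m1 m2 IH unfolding P_def by auto
      then show "P (m + 1 - 1) \<and> P (m + 1) \<and> P (m + 1 + 1)"
        using IH by (simp add: add.assoc)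
    qed
  qed
  have down: "k0 - int n - 1 \<in> I \<longrightarrow> P (k0 - int n - 1) \<and> P (k0 - int n) \<and> P (k0 - int n + 1)" for n
  proof (induction n)
    case 0
    then show ?case using b1 b2 b3 by (simp add: P_def)
  next
    case (Suc n)
    define m where "m = k0 - int n"
    have em: "k0 - int (Suc n) = m - 1" unfolding m_def by simp
    show ?case unfolding em
    proof
      assume h: "m - 1 - 1 \<in> I"
      have m1: "m + 1 \<in> I" by (rule iv_mem[OF iv h k0(3)]) (simp_all add: m_def)
      have m0: "m \<in> I" by (rule iv_mem[OF iv h k0(3)]) (simp_all add: m_def)
      have mm: "m - 1 \<in> I" by (rule iv_mem[OF iv h k0(3)]) (simp_all add: m_def)
      have mm2: "m - 1 - 1 \<in> I" by fact
      from Suc mm have IH: "P (m - 1)" "P m" "P (m+1)" unfolding m_def by auto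
      have e1: "m - 1 + 1 = m" "m - 1 + 2 = m + 1" "m - 1 + 1 + 1 = m + 1" by simp_all
      have "P (m - 1 - 1)" unfolding P_def
        apply (rule step_down[of r "m - 1" rb])
        using Dr[OF mm2 mm] Drb[OF mm2 mm] Dr[OF mm m0 m1] inv[rule_format, of "m - 1"]
          mm2 mm m0 m1 IH unfolding P_def e1 by auto
      then show "P (m - 1 - 1) \<and> P (m - 1) \<and> P (m - 1 + 1)"
        using IH by simp
    qed
  qed
  have "\<forall>k\<in>I. P k"
  proof
    fix k assume k: "k \<in> I"
    show "P k"
    proof (cases "k \<ge> k0 + 1")
      case True
      then have "k = k0 + int (nat (k - k0 - 1)) + 1" by simp
      then show ?thesis using up[of "nat (k - k0 - 1)"] k by metis
    next
      case False
      show ?thesis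
      proof (cases "k \<ge> k0 - 1")
        case True
        then have "k = k0 - 1 \<or> k = k0 \<or> k = k0 + 1" using False by auto
        then show ?thesis using b1 b2 b3 P_def by auto
      next
        case False
        then have "k = k0 - int (nat (k0 - 1 - k)) - 1" by simp
        then show ?thesis using down[of "nat (k0 - 1 - k)"] k by metis
      qed
    qed
  qed
  then show "\<exists>A :: real^3^3. invertible A \<and> (\<forall>k\<in>I. r k = A *v rb k)"
    using iA unfolding P_def by blast
qed

end
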